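(* Let $f$ satisfy the standing assumptions below and for $\xi,u_1\in(0,1)$ define $$F_0(\xi,u_1)=\frac{1}{2\sqrt2}\int_{-1}^{1}\frac{f'\!\left(\frac{1+\mu}{2}\xi+\frac{1-\mu}{2}u_1\right)}{\sqrt{1-\mu}}\,d\mu .$$ Then: (1) for each $u_1\in(0,1)$, $\lim_{\xi\to0}F_0(\xi,u_1)=\lim_{\xi\to1}F_0(\xi,u_1)=-\infty$; (2) there exists $\delta>0$ such that $\frac{\partial^2}{\partial\xi^2}F_0(\xi,u_1)<0$ for all $0<\xi<1$ and $1-\delta<u_1<1$; (3) $\displaystyle\lim_{u_1\to1}\frac{\partial_\xi F_0(\xi,u_1)}{F_0(\xi,u_1)}=\frac{1}{1-\xi}$ uniformly for $\xi$ in every compact subset of $(0,1)$.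
   Context: Standing assumptions: $f:(0,1)\to\mathbb{R}$ is the inverse of a smooth strictly decreasing function $u_0:\mathbb{R}\to(0,1)$ with $u_0(-\infty)=1$, $u_0(+\infty)=0$; thus $f$ is smooth with $f'<0$, $\lim_{u\to0}f(u)=+\infty$, $\lim_{u\to1}f(u)=-\infty$; moreover $f'''(u)<0$ for $u$ in a neighborhood of $0$ and in a neighborhood of $1$. *)

theory Defs
  imports "HOL-Analysis.Analysis"
begin

definition smooth_on :: "real set \<Rightarrow> (real \<Rightarrow> real) \<Rightarrow> bool" where
  "smooth_on S g \<longleftrightarrow> (\<forall>k. \<forall>x\<in>S. ((deriv ^^ k) g) differentiable (at x))"

definition F0 :: "(real \<Rightarrow> real) \<Rightarrow> real \<Rightarrow> real \<Rightarrow> real" where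
  "F0 f \<xi> u\<^sub>1 = (1 / (2 * sqrt 2)) *
     integral {-1..1} (\<lambda>\<mu>. deriv f ((1 + \<mu>) / 2 * \<xi> + (1 - \<mu>) / 2 * u\<^sub>1) / sqrt (1 - \<mu>))"

end

theory Submission
  imports Defs
begin


definition vv :: "real \<Rightarrow> real \<Rightarrow> real \<Rightarrow> real" where
  "vv x u s = x + s\<^sup>2 * (u - x)"

lemma vv_in:
  assumes "0 < x" "x < 1" "0 < u" "u < 1" "0 \<le> s" "s \<le> 1"
  shows "0 < vv x u s" "vv x u s < 1"
proof -
  have t: "0 \<le> s\<^sup>2" "s\<^sup>2 \<le> 1" using assms by (auto simp: power_le_one)
  have e: "vv x u s = (1 - s\<^sup>2) * x + s\<^sup>2 * u" by (simp add: vv_def algebra_simps)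
  have "(1 - s\<^sup>2) * x \<ge> 0" "s\<^sup>2 * u \<ge> 0" using t assms by auto
  moreover have "(1 - s\<^sup>2) * x > 0 \<or> s\<^sup>2 * u > 0"
    using t assms by (cases "s\<^sup>2 = 1") auto
  ultimately show "0 < vv x u s" unfolding e by linarith
  have "(1 - s\<^sup>2) * x \<le> (1 - s\<^sup>2)" "s\<^sup>2 * u \<le> s\<^sup>2" using t assms
    by (auto intro: mult_left_le)
  moreover have "(1 - s\<^sup>2) * x < (1 - s\<^sup>2) \<or> s\<^sup>2 * u < s\<^sup>2"
    using t assms by (cases "s\<^sup>2 = 1") auto
  ultimately show "vv x u s < 1" unfolding e by linarith
qed

lemma vv_0[simp]: "vv x u 0 = x" and vv_1[simp]: "vv x u 1 = u"
  by (auto simp: vv_def)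

lemma vv_deriv: "((\<lambda>s. vv x u s) has_real_derivative (2 * s * (u - x))) (at s within S)"
  unfolding vv_def by (auto intro!: derivative_eq_intros)

lemma vv_cont: "continuous_on S (vv x u)"
  unfolding vv_def by (intro continuous_intros)

locale L =
  fixes f :: "real \<Rightarrow> real"
  assumes smooth: "smooth_on {0<..<1} f"
  and f1neg: "\<And>u. 0 < u \<Longrightarrow> u < 1 \<Longrightarrow> deriv f u < 0"
  and lim0: "filterlim f at_top (at_right 0)"
  and lim1: "filterlim f at_bot (at_left 1)"
  and f3neg0: "\<exists>\<epsilon>>0. \<forall>u. 0 < u \<and> u < \<epsilon> \<longrightarrow> (deriv ^^ 3) f u < 0"
  and f3neg1: "\<exists>\<epsilon>>0. \<forall>u. 1 - \<epsilon> < u \<and> u < 1 \<longrightarrow> (deriv ^^ 3) f u < 0"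
begin

abbreviation "f1 \<equiv> deriv f"
abbreviation "f2 \<equiv> deriv f1"
abbreviation "f3 \<equiv> deriv f2"

lemma f3_eq: "(deriv ^^ 3) f = f3"
  by (simp add: numeral_3_eq_3)

lemma Dk: "x \<in> {0<..<1} \<Longrightarrow> ((deriv ^^ k) f) differentiable (at x)"
  using smooth unfolding smooth_on_def by blast

lemma D0: "x \<in> {0<..<1} \<Longrightarrow> (f has_real_derivative f1 x) (at x)"
  using Dk[of x 0]
  by (simp add: DERIV_deriv_iff_real_differentiable)

lemma D1: "x \<in> {0<..<1} \<Longrightarrow> (f1 has_real_derivative f2 x) (at x)"
  using Dk[of x 1]
  by (simp add: DERIV_deriv_iff_real_differentiable)

lemma D2: "x \<in> {0<..<1} \<Longrightarrow> (f2 has_real_derivative f3 x) (at x)"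
  using Dk[of x 2]
  by (simp add: DERIV_deriv_iff_real_differentiable numeral_2_eq_2)

lemma D3: "x \<in> {0<..<1} \<Longrightarrow> f3 differentiable (at x)"
  using Dk[of x 3]
  by (simp add: numeral_3_eq_3)

lemma C0: "continuous_on {0<..<1} f"
  using D0 by (meson DERIV_isCont continuous_at_imp_continuous_on)
lemma C1: "continuous_on {0<..<1} f1"
  using D1 by (meson DERIV_isCont continuous_at_imp_continuous_on)
lemma C2: "continuous_on {0<..<1} f2"
  using D2 by (meson DERIV_isCont continuous_at_imp_continuous_on)
lemma C3: "continuous_on {0<..<1} f3"
  using D3 by (meson differentiable_imp_continuous_within continuous_at_imp_continuous_on)

definition "K0 x u = integral {0..1} (\<lambda>s. f1 (vv x u s))"
definition "K1 x u = integral {0..1} (\<lambda>s. (1 - s\<^sup>2) * f2 (vv x u s))"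
definition "K2 x u = integral {0..1} (\<lambda>s. (1 - s\<^sup>2)\<^sup>2 * f3 (vv x u s))"

lemma vv_img: "0 < x \<Longrightarrow> x < 1 \<Longrightarrow> 0 < u \<Longrightarrow> u < 1 \<Longrightarrow> vv x u ` {0..1} \<subseteq> {0<..<1}"
  using vv_in by auto

lemma contg:
  assumes "continuous_on {0<..<1} g" "0 < x" "x < 1" "0 < u" "u < 1"
  shows "continuous_on {0..1} (\<lambda>s. g (vv x u s))"
  by (rule continuous_on_compose2[OF assms(1) vv_cont vv_img[OF assms(2-)]])

lemma F0_eq:
  assumes x: "0 < x" "x < 1" and u: "0 < u" "u < 1"
  shows "F0 f x u = K0 x u"
proof -
  define h where "h s = f1 (vv x u s)" for s
  have ch: "continuous_on {0..1} h" unfolding h_def by (rule contg[OF C1 x u])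
  define H where "H r = integral {0..r} h" for r
  have cH: "continuous_on {0..1} H" unfolding H_def
    by (rule indefinite_integral_continuous_1[OF integrable_continuous_real[OF ch]])
  define \<Phi> where "\<Phi> m = - 2 * sqrt 2 * H (sqrt ((1 - m) / 2))" for m
  have c\<Phi>: "continuous_on {-1..1} \<Phi>"
  proof -
    have "continuous_on {-1..1} (\<lambda>m. sqrt ((1 - m) / 2))" by (intro continuous_intros) auto
    moreover have "(\<lambda>m. sqrt ((1 - m) / 2)) ` {-1..1} \<subseteq> {0..1}" by auto
    ultimately have "continuous_on {-1..1} (\<lambda>m. H (sqrt ((1 - m) / 2)))"
      by (rule continuous_on_compose2[OF cH])
    then show ?thesis unfolding \<Phi>_def by (intro continuous_intros)
  qed
  have d\<Phi>: "(\<Phi> has_vector_derivative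
      (\<lambda>m. deriv f ((1 + m) / 2 * x + (1 - m) / 2 * u) / sqrt (1 - m)) m) (at m)"
    if m: "m \<in> {-1<..<1}" for m
  proof -
    define r where "r = sqrt ((1 - m) / 2)"
    have r0: "0 < r" "r < 1" using m by (auto simp: r_def)
    have hH: "(H has_real_derivative h r) (at r)"
      unfolding H_def using integral_has_real_derivative[OF ch, of r] r0
      by (simp add: at_within_Icc_at)
    have dr: "((\<lambda>m. sqrt ((1 - m) / 2)) has_real_derivative (inverse r / 2 * (- 1 / 2))) (at m)"
      unfolding r_def using m
      by (auto intro!: derivative_eq_intros DERIV_real_sqrt[THEN DERIV_chain2])
    have "(\<Phi> has_real_derivative (- 2 * sqrt 2 * (h r * (inverse r / 2 * (- 1 / 2))))) (at m)"
      unfolding \<Phi>_def by (intro DERIV_cmult DERIV_chain2[OF _ dr]) (simp add: r_def[symmetric] hH)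
    moreover have "- 2 * sqrt 2 * (h r * (inverse r / 2 * (- 1 / 2))) =
       deriv f ((1 + m) / 2 * x + (1 - m) / 2 * u) / sqrt (1 - m)"
    proof -
      have r2: "r\<^sup>2 = (1 - m) / 2" using m by (simp add: r_def)
      have s2: "sqrt 2 * r = sqrt (1 - m)" unfolding r_def
        by (subst real_sqrt_mult[symmetric]) simp
      have "h r = deriv f ((1 + m) / 2 * x + (1 - m) / 2 * u)"
        unfolding h_def vv_def r2 by (rule arg_cong[where f=f1]) (simp add: field_simps)
      moreover have "- 2 * sqrt 2 * (inverse r / 2 * (- 1 / 2)) = 1 / sqrt (1 - m)"
        using r0 s2[symmetric] by (simp add: field_simps)
      ultimately show ?thesis by (metis (no_types, lifting) mult.assoc mult.commute times_divide_eq_right mult_1_right)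
    qed
    ultimately show ?thesis by (simp add: has_real_derivative_iff_has_vector_derivative)
  qed
  have I: "((\<lambda>m. deriv f ((1 + m) / 2 * x + (1 - m) / 2 * u) / sqrt (1 - m)) has_integral (\<Phi> 1 - \<Phi> (-1))) {-1..1}"
    by (rule fundamental_theorem_of_calculus_interior[OF _ c\<Phi> d\<Phi>]) auto
  have "\<Phi> 1 - \<Phi> (-1) = 2 * sqrt 2 * K0 x u"
    by (simp add: \<Phi>_def H_def K0_def h_def[abs_def])
  then show ?thesis using I unfolding F0_def by (simp add: integral_unique)
qed

lemma leib:
  fixes g g' p :: "real \<Rightarrow> real"
  assumes dg: "\<And>y. y \<in> {0<..<1} \<Longrightarrow> (g has_real_derivative g' y) (at y)"
    and cg: "continuous_on {0<..<1} g'" and cp: "continuous_on UNIV p"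
    and x: "0 < x" "x < 1" and u: "0 < u" "u < 1"
  shows "((\<lambda>x. integral {0..1} (\<lambda>s. p s * g (vv x u s))) has_real_derivative
           integral {0..1} (\<lambda>s. p s * (1 - s\<^sup>2) * g' (vv x u s))) (at x)"
proof -
  have cg0: "continuous_on {0<..<1} g"
    using dg by (meson DERIV_isCont continuous_at_imp_continuous_on)
  have "((\<lambda>x. integral (cbox 0 1) (\<lambda>s. p s * g (vv x u s))) has_field_derivative
           integral (cbox 0 1) (\<lambda>s. p s * (1 - s\<^sup>2) * g' (vv x u s))) (at x within {0<..<1})"
  proof (rule leibniz_rule_field_derivative[where fx = "\<lambda>x s. p s * (1 - s\<^sup>2) * g' (vv x u s)"])
    fix y t :: real assume y: "y \<in> {0<..<1}" and t: "t \<in> cbox 0 1"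
    have vin: "vv y u t \<in> {0<..<1}" using vv_in[of y u t] y t u by auto
    have "((\<lambda>y. vv y u t) has_real_derivative (1 - t\<^sup>2)) (at y)"
      unfolding vv_def by (auto intro!: derivative_eq_intros)
    from DERIV_chain2[OF dg[OF vin] this]
    have "((\<lambda>y. p t * g (vv y u t)) has_real_derivative p t * (g' (vv y u t) * (1 - t\<^sup>2))) (at y)"
      by (rule DERIV_cmult)
    then show "((\<lambda>y. p t * g (vv y u t)) has_field_derivative p t * (1 - t\<^sup>2) * g' (vv y u t)) (at y within {0<..<1})"
      by (auto simp: ac_simps intro: has_field_derivative_at_within)
  next
    fix y :: real assume y: "y \<in> {0<..<1}"
    show "(\<lambda>s. p s * g (vv y u s)) integrable_on cbox 0 1"
      using y u by (auto intro!: integrable_continuous_real continuous_intros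
          contg[OF cg0] continuous_on_subset[OF cp])
  next
    have img: "(\<lambda>z. vv (fst z) u (snd z)) ` ({0<..<1} \<times> cbox 0 1) \<subseteq> {0<..<1}"
      using vv_in u by fastforce
    have c1: "continuous_on ({0<..<1} \<times> cbox 0 1) (\<lambda>z. vv (fst z) u (snd z))"
      unfolding vv_def by (intro continuous_intros)
    have "continuous_on ({0<..<1} \<times> cbox 0 1) (\<lambda>z. p (snd z) * (1 - (snd z)\<^sup>2) * g' (vv (fst z) u (snd z)))"
      by (intro continuous_intros continuous_on_compose2[OF cg c1 img]
           continuous_on_compose2[OF cp]) auto
    then show "continuous_on ({0<..<1} \<times> cbox 0 1) (\<lambda>(x, t). p t * (1 - t\<^sup>2) * g' (vv x u t))"
      by (simp add: split_beta)
  qed (use x in auto)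
  then show ?thesis using x
    by (simp add: at_within_open[of x "{0<..<1}"])
qed

lemma K0_deriv:
  assumes "0 < x" "x < 1" "0 < u" "u < 1"
  shows "((\<lambda>x. K0 x u) has_real_derivative K1 x u) (at x)"
  using leib[OF D1 C2, of "\<lambda>_. 1" x u] assms unfolding K0_def K1_def by simp

lemma K1_deriv:
  assumes "0 < x" "x < 1" "0 < u" "u < 1"
  shows "((\<lambda>x. K1 x u) has_real_derivative K2 x u) (at x)"
  using leib[OF D2 C3, of "\<lambda>s. 1 - s\<^sup>2" x u] assms unfolding K1_def K2_def
  by (simp add: power2_eq_square mult.assoc continuous_on_diff continuous_on_mult)

lemma F0_d1:
  assumes "0 < x" "x < 1" "0 < u" "u < 1"
  shows "deriv (\<lambda>x. F0 f x u) x = K1 x u"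
proof -
  have "((\<lambda>x. F0 f x u) has_real_derivative K1 x u) (at x)"
    by (rule has_field_derivative_transform_within_open[OF K0_deriv[OF assms], of "{0<..<1}"])
       (use assms F0_eq in auto)
  then show ?thesis by (rule DERIV_imp_deriv)
qed

lemma F0_d2:
  assumes "0 < x" "x < 1" "0 < u" "u < 1"
  shows "deriv (deriv (\<lambda>x. F0 f x u)) x = K2 x u"
proof -
  have "((deriv (\<lambda>x. F0 f x u)) has_real_derivative K2 x u) (at x)"
    by (rule has_field_derivative_transform_within_open[OF K1_deriv[OF assms], of "{0<..<1}"])
       (use assms F0_d1 in auto)
  then show ?thesis by (rule DERIV_imp_deriv)
qed

end


context L begin

lemma ftc01:
  fixes F F' :: "real \<Rightarrow> real"
  assumes "continuous_on {0..1} F" "\<And>s. 0 < s \<Longrightarrow> s < 1 \<Longrightarrow> (F has_real_derivative F' s) (at s)"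
  shows "(F' has_integral (F 1 - F 0)) {0..1}"
  by (rule fundamental_theorem_of_calculus_interior)
     (use assms in \<open>auto simp: has_real_derivative_iff_has_vector_derivative\<close>)

lemma intA:
  assumes x: "0 < x" "x < 1" and u: "0 < u" "u < 1"
  shows "((\<lambda>s. f1 (vv x u s) * (2 * s * (u - x))) has_integral (f u - f x)) {0..1}"
proof -
  have "((\<lambda>s. f (vv x u s)) has_real_derivative f1 (vv x u s) * (2 * s * (u - x))) (at s)"
    if "0 < s" "s < 1" for s
    by (rule DERIV_chain2[OF D0 vv_deriv]) (use vv_in x u that in auto)
  from ftc01[OF contg[OF C0 x u] this] show ?thesis by simp
qed

lemma intB:
  assumes x: "0 < x" "x < 1" and u: "0 < u" "u < 1"
  shows "((\<lambda>s. - 2 * s * f1 (vv x u s) + (1 - s\<^sup>2) * (f2 (vv x u s) * (2 * s * (u - x))))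
     has_integral (- f1 x)) {0..1}"
proof -
  have d: "((\<lambda>s. (1 - s\<^sup>2) * f1 (vv x u s)) has_real_derivative
      - 2 * s * f1 (vv x u s) + (1 - s\<^sup>2) * (f2 (vv x u s) * (2 * s * (u - x)))) (at s)"
    if "0 < s" "s < 1" for s
  proof -
    have "(f1 has_real_derivative f2 (vv x u s)) (at (vv x u s))"
      by (rule D1) (use vv_in x u that in auto)
    from DERIV_chain2[OF this vv_deriv]
    show ?thesis by (auto intro!: derivative_eq_intros)
  qed
  have c: "continuous_on {0..1} (\<lambda>s. (1 - s\<^sup>2) * f1 (vv x u s))"
    by (intro continuous_intros contg[OF C1 x u])
  show ?thesis using ftc01[OF c d] by simp
qed

lemma sf1_int:
  assumes x: "0 < x" "x < 1" and u: "0 < u" "u < 1" and "x \<noteq> u"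
  shows "((\<lambda>s. s * f1 (vv x u s)) has_integral ((f u - f x) / (2 * (u - x)))) {0..1}"
proof -
  have eq: "(\<lambda>s. 1 / (2 * (u - x)) * (f1 (vv x u s) * (2 * s * (u - x)))) = (\<lambda>s. s * f1 (vv x u s))"
    using assms by (auto simp: fun_eq_iff field_simps)
  from has_integral_mult_right[OF intA[OF x u], of "1 / (2 * (u - x))"]
  show ?thesis unfolding eq by simp
qed

lemma F0_le:
  assumes x: "0 < x" "x < 1" and u: "0 < u" "u < 1" and "x \<noteq> u"
  shows "F0 f x u \<le> (f u - f x) / (2 * (u - x))"
proof -
  have i: "(\<lambda>s. f1 (vv x u s)) integrable_on {0..1}"
    by (rule integrable_continuous_real[OF contg[OF C1 x u]])
  have "K0 x u \<le> (f u - f x) / (2 * (u - x))"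
    unfolding K0_def
  proof (rule has_integral_le[OF integrable_integral[OF i] sf1_int[OF assms]])
    fix s :: real assume s: "s \<in> {0..1}"
    have "f1 (vv x u s) < 0" using f1neg vv_in[OF x u, of s] s by auto
    then show "f1 (vv x u s) \<le> s * f1 (vv x u s)" using s
      by (simp add: mult_le_cancel_right1) 
  qed
  then show ?thesis using F0_eq[OF x u] by simp
qed

lemma part1:
  assumes u: "0 < u" "u < 1"
  shows "filterlim (\<lambda>x. F0 f x u) at_bot (at_right 0) \<and> filterlim (\<lambda>x. F0 f x u) at_bot (at_left 1)"
proof
  show "filterlim (\<lambda>x. F0 f x u) at_bot (at_right 0)"
    unfolding filterlim_at_bot
  proof
    fix Z :: real
    have e1: "eventually (\<lambda>x. 0 < x \<and> x < u) (at_right (0::real))"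
      unfolding eventually_at_right_field using u by blast
    have e2: "eventually (\<lambda>x. f u + 2 * \<bar>Z\<bar> + 2 \<le> f x) (at_right (0::real))"
      using lim0 unfolding filterlim_at_top by blast
    show "eventually (\<lambda>x. F0 f x u \<le> Z) (at_right 0)"
    proof (rule eventually_mono[OF eventually_conj[OF e1 e2]])
      fix x assume h: "(0 < x \<and> x < u) \<and> f u + 2 * \<bar>Z\<bar> + 2 \<le> f x"
      have "F0 f x u \<le> (f u - f x) / (2 * (u - x))" by (rule F0_le) (use h u in auto)
      also have "\<dots> \<le> (f u - f x) / 2"
        by (rule divide_left_mono_neg) (use h u in auto)
      also have "\<dots> \<le> Z" using h by auto
      finally show "F0 f x u \<le> Z" .
    qed
  qed
  show "filterlim (\<lambda>x. F0 f x u) at_bot (at_left 1)"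
    unfolding filterlim_at_bot
  proof
    fix Z :: real
    have e1: "eventually (\<lambda>x. u < x \<and> x < 1) (at_left (1::real))"
      unfolding eventually_at_left_field using u by blast
    have e2: "eventually (\<lambda>x. f x \<le> f u - 2 * \<bar>Z\<bar> - 2) (at_left (1::real))"
      using lim1 unfolding filterlim_at_bot by blast
    show "eventually (\<lambda>x. F0 f x u \<le> Z) (at_left 1)"
    proof (rule eventually_mono[OF eventually_conj[OF e1 e2]])
      fix x assume h: "(u < x \<and> x < 1) \<and> f x \<le> f u - 2 * \<bar>Z\<bar> - 2"
      have "F0 f x u \<le> (f u - f x) / (2 * (u - x))" by (rule F0_le) (use h u in auto)
      also have "\<dots> = (f x - f u) / (2 * (x - u))" using minus_divide_divide[of "f x - f u" "2*(x-u)"] by (simp add: algebra_simps)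
      also have "\<dots> \<le> (f x - f u) / 2"
        by (rule divide_left_mono_neg) (use h u in auto)
      also have "\<dots> \<le> Z" using h by auto
      finally show "F0 f x u \<le> Z" .
    qed
  qed
qed

end



lemma vv_between:
  assumes "0 \<le> s" "s \<le> 1"
  shows "min x u \<le> vv x u s" "vv x u s \<le> max x u"
proof -
  have t: "0 \<le> s\<^sup>2" "s\<^sup>2 \<le> 1" using assms by (auto simp: power_le_one)
  have e: "vv x u s = (1 - s\<^sup>2) * x + s\<^sup>2 * u" by (simp add: vv_def algebra_simps)
  have "(1 - s\<^sup>2) * min x u \<le> (1 - s\<^sup>2) * x" "s\<^sup>2 * min x u \<le> s\<^sup>2 * u"
    using t by (auto intro!: mult_left_mono)
  then show "min x u \<le> vv x u s" unfolding e by (simp add: algebra_simps)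
  have "(1 - s\<^sup>2) * x \<le> (1 - s\<^sup>2) * max x u" "s\<^sup>2 * u \<le> s\<^sup>2 * max x u"
    using t by (auto intro!: mult_left_mono)
  then show "vv x u s \<le> max x u" unfolding e by (simp add: algebra_simps)
qed

lemma alg1: "(1/2) * (A * D)\<^sup>2 * F * (2 * s * D) = (A\<^sup>2 * F) * (s * D^3)" for A D F s :: real
  by (simp add: power2_eq_square power3_eq_cube)

context L begin

definition "Q u y = (1/2) * ((u - y)\<^sup>2 * f2 y + 2 * (u - y) * f1 y + 2 * f y)"

lemma Q_deriv:
  assumes "y \<in> {0<..<1}"
  shows "(Q u has_real_derivative (1/2) * (u - y)\<^sup>2 * f3 y) (at y)"
  using assms unfolding Q_def[abs_def]
  by (auto intro!: derivative_eq_intros D0 D1 D2 simp: algebra_simps power2_eq_square)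

lemma Q_cont: "continuous_on {0<..<1} (Q u)"
  unfolding Q_def[abs_def] by (intro continuous_intros C0 C1 C2)

lemma Q_u: "Q u u = f u" by (simp add: Q_def)

lemma K2_neg: "\<exists>\<delta>>0. \<forall>x u. 0 < x \<and> x < 1 \<and> 1 - \<delta> < u \<and> u < 1 \<longrightarrow> K2 x u < 0"
proof -
  obtain e0 where e0: "e0 > 0" "\<And>y. 0 < y \<Longrightarrow> y < e0 \<Longrightarrow> f3 y < 0"
    using f3neg0 unfolding f3_eq by blast
  obtain e1 where e1: "e1 > 0" "\<And>y. 1 - e1 < y \<Longrightarrow> y < 1 \<Longrightarrow> f3 y < 0"
    using f3neg1 unfolding f3_eq by blast
  define e where "e = min (min e0 e1) (1/4)"
  define a where "a = 1 - e"
  have e: "0 < e" "e \<le> 1/4" "e \<le> e0" "e \<le> e1" using e0 e1 by (auto simp: e_def)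
  have a: "3/4 \<le> a" "a < 1" "e < a" using e by (auto simp: a_def)
  have f3lo: "\<And>y. 0 < y \<Longrightarrow> y < e \<Longrightarrow> f3 y < 0" using e0 e by auto
  have f3hi: "\<And>y. a < y \<Longrightarrow> y < 1 \<Longrightarrow> f3 y < 0" using e1 e by (auto simp: a_def)
  have "continuous_on {e..a} f3"
    by (rule continuous_on_subset[OF C3]) (use a e in auto)
  then obtain ym where ym: "\<forall>y\<in>{e..a}. f3 y \<le> f3 ym"
    using continuous_attains_sup[of "{e..a}" f3] a by auto
  define M where "M = max 0 (f3 ym)"
  have M: "0 \<le> M" "\<And>y. e \<le> y \<Longrightarrow> y \<le> a \<Longrightarrow> f3 y \<le> M"
    using ym by (auto simp: M_def intro: max.coboundedI2)
  define q0 where "q0 = (1/2) * (- \<bar>f2 a\<bar> - 2 * \<bar>f1 a\<bar> + 2 * f a)"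
  have q0: "q0 \<le> Q u a" if "a < u" "u < 1" for u
  proof -
    have h1: "\<bar>u - a\<bar> \<le> 1" using that a by auto
    have h2: "(u - a)\<^sup>2 \<le> 1" using h1 by (simp add: abs_square_le_1)
    have "\<bar>(u - a)\<^sup>2 * f2 a\<bar> \<le> \<bar>f2 a\<bar>"
      using h2 by (simp add: abs_mult mult_left_le_one_le)
    moreover have "\<bar>(u - a) * f1 a\<bar> \<le> \<bar>f1 a\<bar>"
      using h1 by (simp add: abs_mult mult_left_le_one_le)
    moreover have "Q u a = (1/2) * ((u - a)\<^sup>2 * f2 a + 2 * ((u - a) * f1 a) + 2 * f a)"
      by (simp add: Q_def mult.assoc)
    ultimately show ?thesis unfolding q0_def by (auto simp: abs_le_iff)
  qed
  have "eventually (\<lambda>y. f y \<le> q0 - M - 1) (at_left (1::real))"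
    using lim1 unfolding filterlim_at_bot by blast
  then obtain b where b: "b < 1" "\<And>y. b < y \<Longrightarrow> y < 1 \<Longrightarrow> f y < q0 - M"
    unfolding eventually_at_left_field by force
  define \<delta> where "\<delta> = min (1 - b) e"
  have "\<delta> > 0" using b e by (auto simp: \<delta>_def)
  moreover have "K2 x u < 0" if xu: "0 < x" "x < 1" "1 - \<delta> < u" "u < 1" for x u
  proof -
    have u: "a < u" "b < u" "0 < u" using xu a by (auto simp: \<delta>_def a_def)
    define h where "h s = (1 - s\<^sup>2)\<^sup>2 * f3 (vv x u s)" for s
    have ch: "continuous_on {0..1} h" unfolding h_def
      by (intro continuous_intros contg[OF C3]) (use xu u in auto)
    show ?thesis
    proof (cases "x \<le> a")
      case True
      have xu2: "x < u" using True u by auto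
      define G where "G s = Q u (max (vv x u s) a)" for s
      define g where "g s = (if a < vv x u s then (1/2) * (u - vv x u s)\<^sup>2 * f3 (vv x u s) * (2 * s * (u - x)) else 0)" for s
      define s0 where "s0 = sqrt ((a - x) / (u - x))"
      have cvv: "continuous_on UNIV (vv x u)" by (rule vv_cont)
      have gint: "(g has_integral (G 1 - G 0)) {0..1}"
      proof (rule fundamental_theorem_of_calculus_interior_strong[where S="{s0}"])
        have "continuous_on {0..1} (\<lambda>s. max (vv x u s) a)"
          by (intro continuous_intros vv_cont)
        moreover have "(\<lambda>s. max (vv x u s) a) ` {0..1} \<subseteq> {0<..<1}"
          using vv_between[of _ x u] vv_in[of x u] xu u a by fastforce
        ultimately show "continuous_on {0..1} G" unfolding G_def
          by (rule continuous_on_compose2[OF Q_cont])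
      next
        fix s assume s: "s \<in> {0<..<1} - {s0}"
        have vin: "vv x u s \<in> {0<..<1}" using vv_in[of x u s] xu u s by auto
        have ne: "vv x u s \<noteq> a"
        proof
          assume "vv x u s = a"
          then have "s\<^sup>2 = (a - x) / (u - x)" using xu2 by (simp add: vv_def field_simps)
          then have "s = s0" unfolding s0_def using s by (metis real_sqrt_abs abs_of_pos greaterThanLessThan_iff DiffD1)
          then show False using s by auto
        qed
        show "(G has_vector_derivative g s) (at s)"
          unfolding has_real_derivative_iff_has_vector_derivative[symmetric]
        proof (cases "a < vv x u s")
          case True
          have d: "((\<lambda>t. Q u (vv x u t)) has_real_derivative
                   (1/2) * (u - vv x u s)\<^sup>2 * f3 (vv x u s) * (2 * s * (u - x))) (at s)"
            by (rule DERIV_chain2[OF Q_deriv[OF vin] vv_deriv])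
          have gs: "g s = (1/2) * (u - vv x u s)\<^sup>2 * f3 (vv x u s) * (2 * s * (u - x))"
            using True by (simp add: g_def)
          have op: "open {t. a < vv x u t}"
            by (rule open_Collect_less[OF continuous_on_const cvv])
          show "(G has_real_derivative g s) (at s)"
            unfolding gs
            by (rule has_field_derivative_transform_within_open[OF d op]) (use True in \<open>auto simp: G_def\<close>)
        next
          case False
          then have F: "vv x u s < a" using ne by auto
          have gs: "g s = 0" using F by (simp add: g_def)
          have op: "open {t. vv x u t < a}"
            by (rule open_Collect_less[OF cvv continuous_on_const])
          show "(G has_real_derivative g s) (at s)"
            unfolding gs
            by (rule has_field_derivative_transform_within_open[OF DERIV_const[of "Q u a" "at s"] op])
               (use F in \<open>auto simp: G_def max_def\<close>)
        qed
      qed auto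
      have G1: "G 1 = f u" using u by (simp add: G_def Q_u)
      have G0: "G 0 = Q u a" using True by (simp add: G_def)
      have pt: "h s \<le> M + g s" if s: "s \<in> {0..1}" for s
      proof -
        define y where "y = vv x u s"
        have y: "0 < y" "y < 1" "y \<le> u" using vv_in[of x u s] vv_between[of s x u] xu u xu2 s
          by (auto simp: y_def)
        define w where "w = (1 - s\<^sup>2)\<^sup>2"
        have w: "0 \<le> w" "w \<le> 1" using s unfolding w_def
          by (auto simp: power_le_one intro!: power_le_one)
        have hw: "h s = w * f3 y" by (simp add: h_def w_def y_def)
        consider "y < e" | "e \<le> y \<and> y \<le> a" | "a < y" by linarith
        then show ?thesis
        proof cases
          case 1
          then have "g s = 0" using a by (simp add: g_def y_def[symmetric])
          moreover have "w * f3 y \<le> 0" using f3lo[of y] 1 y w by (simp add: mult_nonneg_nonpos)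
          ultimately show ?thesis using hw M by simp
        next
          case 2
          then have "g s = 0" by (simp add: g_def y_def[symmetric])
          moreover have "w * f3 y \<le> w * M" using M(2)[of y] 2 w by (simp add: mult_left_mono)
          moreover have "w * M \<le> M" using w M by (simp add: mult_left_le_one_le)
          ultimately show ?thesis using hw by simp
        next
          case 3
          have f3y: "f3 y < 0" using f3hi[of y] 3 y by simp
          have uy: "u - y = (1 - s\<^sup>2) * (u - x)" by (simp add: y_def vv_def algebra_simps)
          define c where "c = s * (u - x) ^ 3"
          have c: "0 \<le> c" "c \<le> 1" using s xu xu2 unfolding c_def
            by (auto intro!: mult_le_one power_le_one)
          have "g s = (1/2) * ((1 - s\<^sup>2) * (u - x))\<^sup>2 * f3 y * (2 * s * (u - x))"
            using 3 by (simp add: g_def y_def[symmetric] uy)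
          also have "\<dots> = ((1 - s\<^sup>2)\<^sup>2 * f3 y) * (s * (u - x) ^ 3)" by (rule alg1)
          finally have "g s = h s * c" by (simp add: hw w_def c_def)
          moreover have "h s * (1 - c) \<le> 0" using hw f3y w c by (simp add: mult_nonpos_nonneg mult_nonneg_nonpos)
          ultimately show ?thesis using M by (simp add: algebra_simps)
        qed
      qed
      have Mg: "((\<lambda>s. M + g s) has_integral (M + (f u - Q u a))) {0..1}"
        using has_integral_add[OF has_integral_const_real[of M 0 1] gint] by (simp add: G1 G0)
      have "K2 x u \<le> M + (f u - Q u a)"
        unfolding K2_def h_def[symmetric]
        by (rule has_integral_le[OF integrable_integral[OF integrable_continuous_real[OF ch]] Mg pt])
      also have "\<dots> < 0" using b(2)[of u] u xu q0[of u] by linarith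
      finally show ?thesis .
    next
      case False
      have "integral {0..1} h < integral {0..1} (\<lambda>_::real. 0::real)"
      proof (rule integral_less_real)
        fix s :: real assume s: "s \<in> {0<..<1}"
        have "min x u \<le> vv x u s" "vv x u s \<le> max x u" using vv_between[of s x u] s by auto
        then have "a < vv x u s" "vv x u s < 1" using False u xu by auto
        then have "f3 (vv x u s) < 0" by (rule f3hi)
        moreover have "s\<^sup>2 < 1" using s by (simp add: abs_square_less_1)
        then have "0 < (1 - s\<^sup>2)\<^sup>2" by simp
        ultimately show "h s < 0" unfolding h_def by (simp add: mult_pos_neg)
      qed (use ch in auto)
      then show ?thesis by (simp add: K2_def h_def[abs_def])
    qed
  qed
  ultimately show ?thesis by blast
qed

end



lemma lin_help: "\<bar>N\<bar> \<le> \<bar>F1\<bar> / 2 + \<bar>Y\<bar> + \<bar>Z\<bar> \<Longrightarrow> \<bar>Y\<bar> \<le> 2 * C + p + q \<Longrightarrow> \<bar>Z\<bar> \<le> C + p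
  \<Longrightarrow> \<bar>F1\<bar> \<le> Cf \<Longrightarrow> P = Cf / 2 + 3 * C + q \<Longrightarrow> \<bar>N\<bar> \<le> P + 2 * (p::real)"
  by linarith

lemma alg_main:
  fixes X D c C Cf F1 K0 K1 e2 \<epsilon> P B :: real
  assumes c: "0 < c" "c \<le> D" "D \<le> 1" and \<epsilon>: "0 < \<epsilon>"
    and e2: "0 \<le> e2" "e2 \<le> 1/2" "e2 \<le> \<epsilon> * c\<^sup>2 / 32"
    and C: "0 \<le> C" and F1: "\<bar>F1\<bar> \<le> Cf"
    and P: "P = Cf/2 + 3*C + Cf/(2*c)"
    and X: "4*C + 1 \<le> X" "16*P/(c*\<epsilon>) \<le> X"
    and B: "B = - (2*X + F1) / (2*D)"
    and h0: "\<bar>K0 + X\<bar> \<le> C + e2*X"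
    and h1: "\<bar>K1 - B\<bar> \<le> C + e2*(C - B)"
  shows "\<bar>K1/K0 - 1/D\<bar> \<le> \<epsilon>/2"
proof -
  have Cf: "0 \<le> Cf" using F1 by linarith
  have D0: "0 < D" using c by linarith
  have Xp: "0 < X" using X C by linarith
  have P0: "0 \<le> P" using P Cf C c by auto
  have "\<bar>2*X + F1\<bar> \<le> 2*X + Cf" using F1 Xp by linarith
  then have "\<bar>2*X + F1\<bar> / (2*D) \<le> (2*X + Cf) / (2*c)"
    using c by (intro frac_le) auto
  moreover have "\<bar>B\<bar> = \<bar>(2*X + F1) / (2*D)\<bar>" unfolding B by (simp only: minus_divide_left abs_minus_cancel)
  moreover have "\<bar>(2*X + F1) / (2*D)\<bar> = \<bar>2*X + F1\<bar> / (2*D)" using D0 by (simp add: abs_divide)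
  ultimately have Bb: "\<bar>B\<bar> \<le> (2*X + Cf) / (2*c)" by linarith
  have BD: "B * D = - (2*X + F1) / 2" using D0 by (simp add: B)
  define N where "N = K1 * D - K0"
  have Neq: "N = - F1/2 + (K1 - B) * D - (K0 + X)" using BD by (simp add: N_def algebra_simps)
  have t1: "\<bar>(K1 - B) * D\<bar> \<le> \<bar>K1 - B\<bar>" using c D0 by (simp add: abs_mult mult_right_le_one_le)
  have "e2 * (- B) \<le> e2 * \<bar>B\<bar>" using e2 by (intro mult_left_mono) auto
  then have t2: "e2 * (C - B) \<le> e2 * C + e2 * \<bar>B\<bar>" by (simp add: algebra_simps)
  have t3: "e2 * \<bar>B\<bar> \<le> e2 * ((2*X + Cf) / (2*c))" using e2 Bb by (intro mult_left_mono) auto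
  have t4: "e2 * ((2*X + Cf) / (2*c)) = e2 * X / c + e2 * Cf / (2*c)" using c by (simp add: field_simps)
  have t5: "e2 * Cf / (2*c) \<le> Cf / (2*c)" using e2 Cf c by (intro divide_right_mono) (auto simp: mult_left_le_one_le)
  have "e2 * X * c \<le> e2 * X" using e2 Xp c by (intro mult_right_le_one_le) auto
  then have t6: "e2 * X \<le> e2 * X / c" using c by (simp add: le_divide_eq)
  have t7: "e2 * C \<le> C" using e2 C by (simp add: mult_left_le_one_le)
  have Bneg: "e2 * (C - B) \<le> C + e2 * X / c + Cf / (2*c)" using t2 t3 t4 t5 t7 by linarith
  have Yb: "\<bar>(K1 - B) * D\<bar> \<le> 2 * C + e2 * X / c + Cf / (2*c)" using t1 h1 Bneg by linarith
  have Zb: "\<bar>K0 + X\<bar> \<le> C + e2 * X / c" using h0 t6 by linarith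
  have "\<bar>N\<bar> \<le> \<bar>F1\<bar> / 2 + \<bar>(K1 - B) * D\<bar> + \<bar>K0 + X\<bar>" unfolding Neq by linarith
  then have Nb0: "\<bar>N\<bar> \<le> P + 2 * (e2 * X / c)" by (rule lin_help[OF _ Yb Zb F1 P])
  then have Nb: "\<bar>N\<bar> \<le> P + 2 * e2 * X / c" by simp
  have "e2 * X \<le> X/2" using e2 Xp by (intro order_trans[OF mult_right_mono[of e2 "1/2" X]]) auto
  then have K0b: "X / 4 \<le> \<bar>K0\<bar>" using h0 X C unfolding abs_le_iff by linarith
  have K0ne: "K0 \<noteq> 0" using K0b Xp by auto
  have eq: "K1/K0 - 1/D = N / (K0 * D)" using K0ne D0 by (simp add: N_def field_simps)
  have cK: "c * X / 4 \<le> \<bar>K0 * D\<bar>"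
  proof -
    have "c * (X/4) \<le> D * \<bar>K0\<bar>" using c K0b Xp by (intro mult_mono) auto
    then show ?thesis using D0 by (simp add: abs_mult mult.commute)
  qed
  have "\<bar>N / (K0 * D)\<bar> = \<bar>N\<bar> / \<bar>K0 * D\<bar>" by (simp add: abs_divide)
  also have "\<dots> \<le> (P + 2 * e2 * X / c) / (c * X / 4)"
    by (rule frac_le) (use Nb cK P0 e2 c Xp in auto)
  also have "\<dots> = 4 * P / (c * X) + 8 * e2 / c\<^sup>2" using c Xp by (simp add: field_simps power2_eq_square)
  also have "4 * P / (c * X) \<le> \<epsilon> / 4"
  proof -
    have "16 * P \<le> X * (c * \<epsilon>)" using X(2) c \<epsilon> by (simp add: divide_le_eq mult.commute)
    then show ?thesis using c Xp \<epsilon> by (simp add: divide_le_eq field_simps)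
  qed
  also have "8 * e2 / c\<^sup>2 \<le> \<epsilon> / 4" using e2(3) c by (simp add: divide_le_eq field_simps)
  finally show ?thesis using eq by simp
qed
lemma pw1:
  fixes s C e2 F :: real
  assumes "0 \<le> s" "s \<le> 1" "0 < C" "0 \<le> e2" "F < 0" and h: "\<bar>F\<bar> \<le> C \<or> 1 - s \<le> e2 * s"
  shows "(1 - s) * F \<le> C - e2 * (s * F)" "- ((1 - s) * F) \<le> C - e2 * (s * F)"
proof -
  have a: "0 \<le> - (e2 * (s * F))" using assms by (simp add: mult_nonneg_nonpos)
  have b: "(1 - s) * F \<le> 0" using assms by (simp add: mult_nonneg_nonpos)
  then show "(1 - s) * F \<le> C - e2 * (s * F)" using a assms by linarith
  show "- ((1 - s) * F) \<le> C - e2 * (s * F)"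
    using h
  proof
    assume "\<bar>F\<bar> \<le> C"
    moreover have "(1 - s) * (- F) \<le> 1 * (- F)" using assms by (intro mult_right_mono) auto
    ultimately show ?thesis using a by simp
  next
    assume "1 - s \<le> e2 * s"
    then have "(1 - s) * (- F) \<le> (e2 * s) * (- F)" using assms by (intro mult_right_mono) auto
    then show ?thesis using assms by (simp add: algebra_simps)
  qed
qed

lemma pw2:
  fixes s C e2 W G :: real
  assumes "0 \<le> s" "s \<le> 1" "0 < C" "0 \<le> e2" "0 \<le> W" "W \<le> 1"
    and h: "\<bar>G\<bar> \<le> C \<or> (1 - s \<le> e2 * s \<and> G < 0)"
  shows "(1 - s) * W * G \<le> C + e2 * (C - s * W * G)" "- ((1 - s) * W * G) \<le> C + e2 * (C - s * W * G)"
proof -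
  have "(1 - s) * W * G \<le> C + e2 * (C - s * W * G) \<and> - ((1 - s) * W * G) \<le> C + e2 * (C - s * W * G)"
    using h
  proof
    assume G: "\<bar>G\<bar> \<le> C"
    have w1: "\<bar>(1 - s) * W\<bar> \<le> 1" using assms by (auto simp: abs_mult intro: mult_le_one)
    have w2: "\<bar>s * W\<bar> \<le> 1" using assms by (auto simp: abs_mult intro: mult_le_one)
    have "\<bar>(1 - s) * W * G\<bar> \<le> 1 * C" unfolding abs_mult[of "(1 - s) * W"]
      using w1 G by (intro mult_mono) auto
    moreover have "\<bar>s * W * G\<bar> \<le> 1 * C" unfolding abs_mult[of "s * W"]
      using w2 G by (intro mult_mono) auto
    moreover have "0 \<le> e2 * (C - s * W * G)" using calculation assms by (intro mult_nonneg_nonneg) auto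
    ultimately show ?thesis by auto
  next
    assume h2: "1 - s \<le> e2 * s \<and> G < 0"
    have a: "s * W * G \<le> 0" by (rule mult_nonneg_nonpos[OF mult_nonneg_nonneg]) (use assms h2 in auto)
    have b: "(1 - s) * W * G \<le> 0" by (rule mult_nonneg_nonpos[OF mult_nonneg_nonneg]) (use assms h2 in auto)
    have c: "0 \<le> e2 * (C - s * W * G)" using a assms by (intro mult_nonneg_nonneg) auto
    have WG: "0 \<le> W * (- G)" using assms h2 by (intro mult_nonneg_nonneg) auto
    have "(1 - s) * (W * (- G)) \<le> (e2 * s) * (W * (- G))"
      by (rule mult_right_mono) (use h2 WG in auto)
    then have "- ((1 - s) * W * G) \<le> e2 * (- (s * W * G))" by (simp add: algebra_simps)
    also have "\<dots> \<le> e2 * (C - s * W * G)" using assms by (intro mult_left_mono) auto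
    finally show ?thesis using b c assms by linarith
  qed
  then show "(1 - s) * W * G \<le> C + e2 * (C - s * W * G)" "- ((1 - s) * W * G) \<le> C + e2 * (C - s * W * G)"
    by auto
qed

context L begin

lemma f2_neg_near1: "\<exists>b<1. \<forall>y. b < y \<and> y < 1 \<longrightarrow> f2 y < 0"
proof -
  obtain e1 where e1: "e1 > 0" "\<And>y. 1 - e1 < y \<Longrightarrow> y < 1 \<Longrightarrow> f3 y < 0"
    using f3neg1 unfolding f3_eq by blast
  define a0 where "a0 = max (1 - e1) (1/2)"
  have a0: "0 < a0" "a0 < 1" "1 - e1 \<le> a0" using e1 by (auto simp: a0_def)
  have "\<exists>y. a0 < y \<and> y < 1 \<and> f2 y < 0"
  proof (rule ccontr)
    assume "\<not> ?thesis"
    then have nn: "\<And>y. a0 < y \<Longrightarrow> y < 1 \<Longrightarrow> 0 \<le> f2 y" by force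
    define p where "p = (a0 + 1) / 2"
    have p: "a0 < p" "p < 1" using a0 by (auto simp: p_def)
    have mono1: "f1 p \<le> f1 z" if "p \<le> z" "z < 1" for z
    proof (cases "z = p")
      case False
      then have pz: "p < z" using that by auto
      have "\<And>t. p \<le> t \<Longrightarrow> t \<le> z \<Longrightarrow> (f1 has_real_derivative f2 t) (at t)"
        using D1 p a0 that by auto
      then obtain w where w: "p < w" "w < z" "f1 z - f1 p = (z - p) * f2 w"
        using MVT2[OF pz] by blast
      have "0 \<le> (z - p) * f2 w" using nn[of w] w p that pz by simp
      then show ?thesis using w by simp
    qed simp
    have lb: "f p + f1 p \<le> f y" if py: "p < y" "y < 1" for y
    proof -
      have "\<And>t. p \<le> t \<Longrightarrow> t \<le> y \<Longrightarrow> (f has_real_derivative f1 t) (at t)"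
        using D0 p a0 py by auto
      then obtain w where w: "p < w" "w < y" "f y - f p = (y - p) * f1 w"
        using MVT2[OF py(1)] by blast
      have "(y - p) * f1 p \<le> (y - p) * f1 w" using mono1[of w] w that by (intro mult_left_mono) auto
      moreover have "f1 p < 0" using f1neg p a0 by auto
      then have "f1 p \<le> (y - p) * f1 p" using py p a0
        by (simp add: mult_le_cancel_right1)
      ultimately show ?thesis using w by linarith
    qed
    have ev1: "eventually (\<lambda>y. p < y \<and> y < 1) (at_left (1::real))"
      unfolding eventually_at_left_field using p by blast
    have ev2: "eventually (\<lambda>y. f y \<le> f p + f1 p - 1) (at_left (1::real))"
      using lim1 unfolding filterlim_at_bot by blast
    have "eventually (\<lambda>y. False) (at_left (1::real))"
      by (rule eventually_mono[OF eventually_conj[OF ev1 ev2]]) (use lb in force)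
    then show False by (simp add: eventually_False)
  qed
  then obtain y0 where y0: "a0 < y0" "y0 < 1" "f2 y0 < 0" by blast
  have "f2 y < 0" if yy: "y0 < y" "y < 1" for y
  proof -
    have "\<And>t. y0 \<le> t \<Longrightarrow> t \<le> y \<Longrightarrow> (f2 has_real_derivative f3 t) (at t)"
      using D2 y0 a0 yy by auto
    then obtain w where w: "y0 < w" "w < y" "f2 y - f2 y0 = (y - y0) * f3 w"
      using MVT2[OF yy(1)] by blast
    have "f3 w < 0" using e1(2)[of w] w a0 y0 that by auto
    then have "(y - y0) * f3 w < 0" using that by (simp add: mult_pos_neg)
    then show ?thesis using w y0 by linarith
  qed
  then show ?thesis using y0 by blast
qed

lemma IB:
  assumes x: "0 < x" "x < 1" and u: "0 < u" "u < 1" and xu: "x \<noteq> u"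
  shows "((\<lambda>s. s * (1 - s\<^sup>2) * f2 (vv x u s)) has_integral
          ((2 * ((f u - f x) / (2 * (u - x))) - f1 x) / (2 * (u - x)))) {0..1}"
proof -
  have h: "((\<lambda>s. (- 2 * s * f1 (vv x u s) + (1 - s\<^sup>2) * (f2 (vv x u s) * (2 * s * (u - x))))
      + 2 * (s * f1 (vv x u s))) has_integral (- f1 x + 2 * ((f u - f x) / (2 * (u - x))))) {0..1}"
    by (rule has_integral_add[OF intB[OF x u] has_integral_mult_right[OF sf1_int[OF x u xu]]])
  have d: "2 * (u - x) \<noteq> 0" using xu by simp
  define c where "c = 1 / (2 * (u - x))"
  note h2 = has_integral_mult_right[OF h, of c]
  have v: "c * (- f1 x + 2 * ((f u - f x) / (2 * (u - x)))) = (2 * ((f u - f x) / (2 * (u - x))) - f1 x) / (2 * (u - x))"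
    by (simp add: c_def)
  have fe: "c * ((- 2 * s * f1 (vv x u s) + (1 - s\<^sup>2) * (f2 (vv x u s) * (2 * s * (u - x))))
      + 2 * (s * f1 (vv x u s))) = s * (1 - s\<^sup>2) * f2 (vv x u s)" for s
    using d by (simp add: c_def field_simps)
  show ?thesis using h2 unfolding v fe .
qed

end


lemma lin2: "y = u - W * D \<Longrightarrow> W * D \<le> W * 1 \<Longrightarrow> W \<le> 2 * (1 - s) \<Longrightarrow> u - 2 * (1 - s) \<le> (y::real)"
  by linarith

lemma lin3: "u - 2 * (1 - s) \<le> y \<Longrightarrow> \<not> s \<le> 1 - \<eta> \<Longrightarrow> b \<le> u - 2 * \<eta> \<Longrightarrow> b < (y::real)"
  by (simp add: not_le)

context L begin

lemma core:
  assumes x: "0 < x" "k1 \<le> x" and u: "x < u" "u < 1"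
    and c: "0 < c" "c \<le> u - x"
    and \<eta>: "0 < \<eta>" "\<eta> < 1" "\<eta> = e2 * (1 - \<eta>)" and e2: "0 \<le> e2"
    and C: "0 < C" "\<And>y. k1 \<le> y \<Longrightarrow> y \<le> 1 - \<eta> * c \<Longrightarrow> \<bar>f1 y\<bar> \<le> C \<and> \<bar>f2 y\<bar> \<le> C"
    and b: "\<And>y. b < y \<Longrightarrow> y < 1 \<Longrightarrow> f2 y < 0" "b \<le> u - 2 * \<eta>"
  shows "\<bar>K0 x u - (f u - f x) / (2 * (u - x))\<bar> \<le> C + e2 * (- ((f u - f x) / (2 * (u - x))))"
    and "\<bar>K1 x u - (2 * ((f u - f x) / (2 * (u - x))) - f1 x) / (2 * (u - x))\<bar>
          \<le> C + e2 * (C - (2 * ((f u - f x) / (2 * (u - x))) - f1 x) / (2 * (u - x)))"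
proof -
  define A where "A = (f u - f x) / (2 * (u - x))"
  define B where "B = (2 * A - f1 x) / (2 * (u - x))"
  define D where "D = u - x"
  have x1: "x < 1" and u0: "0 < u" and xu: "x \<noteq> u" using x u by auto
  have D: "c \<le> D" "D \<le> 1" "0 < D" using x u c by (auto simp: D_def)
  have cases: "0 < vv x u s \<and> vv x u s < 1 \<and> (\<bar>f1 (vv x u s)\<bar> \<le> C \<and> \<bar>f2 (vv x u s)\<bar> \<le> C \<or> 1 - s \<le> e2 * s \<and> f2 (vv x u s) < 0)"
    if s: "0 \<le> s" "s \<le> 1" for s
  proof -
    define y where "y = vv x u s"
    have y01: "0 < y" "y < 1" using vv_in[OF x(1) x1 u0 u(2) s] by (auto simp: y_def)
    have yeq: "y = u - (1 - s\<^sup>2) * D" by (simp add: y_def vv_def D_def algebra_simps)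
    have s2: "s\<^sup>2 \<le> s" using s by (simp add: power2_eq_square mult_left_le_one_le)
    have "\<bar>f1 y\<bar> \<le> C \<and> \<bar>f2 y\<bar> \<le> C \<or> 1 - s \<le> e2 * s \<and> f2 y < 0"
    proof (cases "s \<le> 1 - \<eta>")
      case True
      have "\<eta> \<le> 1 - s\<^sup>2" using True s2 by linarith
      then have "\<eta> * c \<le> (1 - s\<^sup>2) * D" using \<eta> c D by (intro mult_mono) auto
      then have "y \<le> 1 - \<eta> * c" using yeq u by linarith
      moreover have "k1 \<le> y" using vv_between(1)[OF s, of x u] x u by (simp add: y_def)
      ultimately show ?thesis using C by blast
    next
      case False
      have "e2 * (1 - \<eta>) \<le> e2 * s" using False e2 by (intro mult_left_mono) auto
      then have es: "1 - s \<le> e2 * s" using False \<eta> by linarith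
      have w0: "0 \<le> 1 - s\<^sup>2" using s by (simp add: power_le_one)
      have "(1 - s\<^sup>2) * D \<le> (1 - s\<^sup>2) * 1" using w0 D by (intro mult_left_mono) auto
      moreover have "1 - s\<^sup>2 \<le> 2 * (1 - s)"
      proof -
        have "0 \<le> (1 - s)\<^sup>2" by simp
        then show ?thesis by (simp add: power2_eq_square algebra_simps)
      qed
      ultimately have "y \<ge> u - 2 * (1 - s)" using yeq lin2[of y u "1 - s\<^sup>2" D s] by simp
      then have "b < y" using False b(2) lin3 by blast
      then have "f2 y < 0" using b(1) y01 by blast
      then show ?thesis using es by blast
    qed
    then show ?thesis using y01 by (simp add: y_def)
  qed
  have cf1: "continuous_on {0..1} (\<lambda>s. f1 (vv x u s))" by (rule contg[OF C1 x(1) x1 u0 u(2)])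
  have cf2: "continuous_on {0..1} (\<lambda>s. f2 (vv x u s))" by (rule contg[OF C2 x(1) x1 u0 u(2)])
  have I0: "((\<lambda>s. f1 (vv x u s)) has_integral K0 x u) {0..1}"
    unfolding K0_def by (rule integrable_integral[OF integrable_continuous_real[OF cf1]])
  have IA: "((\<lambda>s. s * f1 (vv x u s)) has_integral A) {0..1}"
    unfolding A_def by (rule sf1_int[OF x(1) x1 u0 u(2) xu])
  have IR0: "((\<lambda>s. (1 - s) * f1 (vv x u s)) has_integral (K0 x u - A)) {0..1}"
    by (rule has_integral_eq[OF _ has_integral_diff[OF I0 IA]]) (simp add: algebra_simps)
  have Ic: "((\<lambda>s::real. C) has_integral C) {0..1}" using has_integral_const_real[of C 0 1] by (simp add: o_def)
  have Ib0: "((\<lambda>s. C - e2 * (s * f1 (vv x u s))) has_integral (C - e2 * A)) {0..1}"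
    by (rule has_integral_diff[OF Ic has_integral_mult_right[OF IA]])
  have p1: "(1 - s) * f1 (vv x u s) \<le> C - e2 * (s * f1 (vv x u s))"
      "- ((1 - s) * f1 (vv x u s)) \<le> C - e2 * (s * f1 (vv x u s))" if "s \<in> {0..1}" for s
  proof -
    have s: "0 \<le> s" "s \<le> 1" using that by auto
    have "f1 (vv x u s) < 0" using cases[OF s] f1neg by blast
    moreover have "\<bar>f1 (vv x u s)\<bar> \<le> C \<or> 1 - s \<le> e2 * s" using cases[OF s] by blast
    ultimately show "(1 - s) * f1 (vv x u s) \<le> C - e2 * (s * f1 (vv x u s))"
      "- ((1 - s) * f1 (vv x u s)) \<le> C - e2 * (s * f1 (vv x u s))"
      using pw1[OF s C(1) e2] by auto
  qed
  have "K0 x u - A \<le> C - e2 * A" by (rule has_integral_le[OF IR0 Ib0 p1(1)])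
  moreover have "- (K0 x u - A) \<le> C - e2 * A" by (rule has_integral_le[OF has_integral_neg[OF IR0] Ib0 p1(2)])
  ultimately show "\<bar>K0 x u - (f u - f x) / (2 * (u - x))\<bar> \<le> C + e2 * (- ((f u - f x) / (2 * (u - x))))"
    unfolding A_def[symmetric] by (simp add: abs_le_iff)
  have cw: "continuous_on {0..1} (\<lambda>s. (1 - s\<^sup>2) * f2 (vv x u s))" by (intro continuous_intros cf2)
  have I1: "((\<lambda>s. (1 - s\<^sup>2) * f2 (vv x u s)) has_integral K1 x u) {0..1}"
    unfolding K1_def by (rule integrable_integral[OF integrable_continuous_real[OF cw]])
  have IB': "((\<lambda>s. s * (1 - s\<^sup>2) * f2 (vv x u s)) has_integral B) {0..1}"
    unfolding B_def A_def by (rule IB[OF x(1) x1 u0 u(2) xu])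
  have IR1: "((\<lambda>s. (1 - s) * (1 - s\<^sup>2) * f2 (vv x u s)) has_integral (K1 x u - B)) {0..1}"
    by (rule has_integral_eq[OF _ has_integral_diff[OF I1 IB']]) (simp add: algebra_simps)
  have Ib1: "((\<lambda>s. C + e2 * (C - s * (1 - s\<^sup>2) * f2 (vv x u s))) has_integral (C + e2 * (C - B))) {0..1}"
    by (rule has_integral_add[OF Ic has_integral_mult_right[OF has_integral_diff[OF Ic IB']]])
  have p2: "(1 - s) * (1 - s\<^sup>2) * f2 (vv x u s) \<le> C + e2 * (C - s * (1 - s\<^sup>2) * f2 (vv x u s))"
      "- ((1 - s) * (1 - s\<^sup>2) * f2 (vv x u s)) \<le> C + e2 * (C - s * (1 - s\<^sup>2) * f2 (vv x u s))"
      if "s \<in> {0..1}" for s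
  proof -
    have s: "0 \<le> s" "s \<le> 1" using that by auto
    have W: "0 \<le> 1 - s\<^sup>2" "1 - s\<^sup>2 \<le> 1" using s by (auto simp: power_le_one)
    have "\<bar>f2 (vv x u s)\<bar> \<le> C \<or> (1 - s \<le> e2 * s \<and> f2 (vv x u s) < 0)" using cases[OF s] by blast
    from pw2[OF s C(1) e2 W this]
    show "(1 - s) * (1 - s\<^sup>2) * f2 (vv x u s) \<le> C + e2 * (C - s * (1 - s\<^sup>2) * f2 (vv x u s))"
      "- ((1 - s) * (1 - s\<^sup>2) * f2 (vv x u s)) \<le> C + e2 * (C - s * (1 - s\<^sup>2) * f2 (vv x u s))" by auto
  qed
  have "K1 x u - B \<le> C + e2 * (C - B)" by (rule has_integral_le[OF IR1 Ib1 p2(1)])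
  moreover have "- (K1 x u - B) \<le> C + e2 * (C - B)" by (rule has_integral_le[OF has_integral_neg[OF IR1] Ib1 p2(2)])
  ultimately show "\<bar>K1 x u - (2 * ((f u - f x) / (2 * (u - x))) - f1 x) / (2 * (u - x))\<bar>
          \<le> C + e2 * (C - (2 * ((f u - f x) / (2 * (u - x))) - f1 x) / (2 * (u - x)))"
    unfolding A_def[symmetric] B_def[symmetric] by (simp add: abs_le_iff)
qed

lemma bounded_on01:
  assumes "compact S" "S \<subseteq> {0<..<1}" "continuous_on {0<..<1} g"
  shows "\<exists>B>0. \<forall>y\<in>S. \<bar>g y\<bar> \<le> (B::real)"
proof -
  have "compact (g ` S)"
    by (rule compact_continuous_image[OF continuous_on_subset[OF assms(3) assms(2)] assms(1)])
  then have "bounded (g ` S)" by (rule compact_imp_bounded)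
  then show ?thesis unfolding bounded_pos by auto
qed

lemma part3:
  assumes K: "compact K" "K \<subseteq> {0<..<1}"
  shows "uniform_limit K (\<lambda>u \<xi>. deriv (\<lambda>x. F0 f x u) \<xi> / F0 f \<xi> u) (\<lambda>\<xi>. 1 / (1 - \<xi>)) (at_left 1)"
proof (cases "K = {}")
  case True
  then show ?thesis by (simp add: uniform_limit_iff)
next
  case False
  obtain k1 where k1: "k1 \<in> K" "\<And>\<xi>. \<xi> \<in> K \<Longrightarrow> k1 \<le> \<xi>"
    using continuous_attains_inf[OF K(1) False continuous_on_id] by auto
  obtain k2 where k2: "k2 \<in> K" "\<And>\<xi>. \<xi> \<in> K \<Longrightarrow> \<xi> \<le> k2"
    using continuous_attains_sup[OF K(1) False continuous_on_id] by auto
  have k: "0 < k1" "k2 < 1" using K k1 k2 by auto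
  define c where "c = (1 - k2) / 2"
  have c: "0 < c" "c \<le> 1" using k k1 k2 K by (auto simp: c_def)
  obtain Cf where Cf: "Cf > 0" "\<And>\<xi>. \<xi> \<in> K \<Longrightarrow> \<bar>f1 \<xi>\<bar> \<le> Cf"
    using bounded_on01[OF K C1] by auto
  obtain Fb where Fb: "Fb > 0" "\<And>\<xi>. \<xi> \<in> K \<Longrightarrow> \<bar>f \<xi>\<bar> \<le> Fb"
    using bounded_on01[OF K C0] by auto
  obtain b where b: "b < 1" "\<And>y. b < y \<Longrightarrow> y < 1 \<Longrightarrow> f2 y < 0"
    using f2_neg_near1 by blast
  show ?thesis unfolding uniform_limit_iff
  proof (intro allI impI)
    fix \<epsilon> :: real assume \<epsilon>: "0 < \<epsilon>"
    define e2 where "e2 = min (min (1/2) (\<epsilon> * c\<^sup>2 / 32)) ((1 - b) / 4)"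
    have e2: "0 < e2" "e2 \<le> 1/2" "e2 \<le> \<epsilon> * c\<^sup>2 / 32" "e2 \<le> (1 - b) / 4"
      unfolding e2_def using \<epsilon> c b
      by (simp_all only: min_le_iff_disj min_less_iff_conj order_refl) auto
    define \<eta> where "\<eta> = e2 / (1 + e2)"
    have \<eta>: "0 < \<eta>" "\<eta> < 1" "\<eta> = e2 * (1 - \<eta>)" "\<eta> \<le> e2"
      using e2 by (auto simp: \<eta>_def field_simps)
    have \<eta>c: "0 < \<eta> * c" using \<eta> c by simp
    have Ssub: "{k1..1 - \<eta> * c} \<subseteq> {0<..<1}" using k \<eta>c by auto
    obtain C1 where C1: "C1 > 0" "\<forall>y\<in>{k1..1 - \<eta> * c}. \<bar>f1 y\<bar> \<le> C1"
      using bounded_on01[OF compact_Icc Ssub C1] by auto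
    obtain C2 where C2: "C2 > 0" "\<forall>y\<in>{k1..1 - \<eta> * c}. \<bar>f2 y\<bar> \<le> C2"
      using bounded_on01[OF compact_Icc Ssub C2] by auto
    define C where "C = max C1 C2"
    have C: "0 < C" "\<And>y. k1 \<le> y \<Longrightarrow> y \<le> 1 - \<eta> * c \<Longrightarrow> \<bar>f1 y\<bar> \<le> C \<and> \<bar>f2 y\<bar> \<le> C"
      using C1 C2 by (auto simp: C_def intro: max.coboundedI1 max.coboundedI2)
    define P where "P = Cf/2 + 3*C + Cf/(2*c)"
    define X0 where "X0 = max (4*C + 1) (16*P/(c*\<epsilon>))"
    define ub where "ub = max (max ((1 + k2) / 2) (b + 2 * \<eta>)) (1 - \<epsilon> * c\<^sup>2 / 2)"
    have ub: "ub < 1" using k e2 \<eta> \<epsilon> c b by (auto simp: ub_def)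
    have ev1: "eventually (\<lambda>u. ub < u \<and> u < 1) (at_left (1::real))"
      unfolding eventually_at_left_field using ub by blast
    have ev2: "eventually (\<lambda>u. f u \<le> - Fb - 2 * X0) (at_left (1::real))"
      using lim1 unfolding filterlim_at_bot by blast
    show "eventually (\<lambda>u. \<forall>\<xi>\<in>K. dist (deriv (\<lambda>x. F0 f x u) \<xi> / F0 f \<xi> u) (1 / (1 - \<xi>)) < \<epsilon>) (at_left 1)"
    proof (rule eventually_mono[OF eventually_conj[OF ev1 ev2]])
      fix u assume hu: "(ub < u \<and> u < 1) \<and> f u \<le> - Fb - 2 * X0"
      have u: "(1 + k2) / 2 < u" "b + 2 * \<eta> < u" "1 - \<epsilon> * c\<^sup>2 / 2 < u" "u < 1"
        using hu by (auto simp: ub_def)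
      show "\<forall>\<xi>\<in>K. dist (deriv (\<lambda>x. F0 f x u) \<xi> / F0 f \<xi> u) (1 / (1 - \<xi>)) < \<epsilon>"
      proof
        fix \<xi> assume \<xi>K: "\<xi> \<in> K"
        have \<xi>: "0 < \<xi>" "\<xi> < 1" "k1 \<le> \<xi>" "\<xi> \<le> k2" using \<xi>K K k1 k2 by auto
        have xu: "\<xi> < u" using \<xi>(4) u(1) k(2) by argo
        define D where "D = u - \<xi>"
        have D: "c \<le> D" "D \<le> 1" "0 < D" using u \<xi> k by (auto simp: D_def c_def)
        have u0: "0 < u" using xu \<xi> by linarith
        define A where "A = (f u - f \<xi>) / (2 * (u - \<xi>))"
        define X where "X = - A"
        define B where "B = (2 * A - f1 \<xi>) / (2 * (u - \<xi>))"
        have bu: "b \<le> u - 2 * \<eta>" using u(2) by argo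
        have Dc: "c \<le> u - \<xi>" using D(1) by (simp add: D_def)
        have e20: "0 \<le> e2" using e2(1) by simp
        have cr1: "\<bar>K0 \<xi> u - A\<bar> \<le> C + e2 * (- A)"
          unfolding A_def by (rule core(1)[OF \<xi>(1) \<xi>(3) xu u(4) c(1) Dc \<eta>(1) \<eta>(2) \<eta>(3) e20 C(1) C(2) b(2) bu])
        have cr2: "\<bar>K1 \<xi> u - B\<bar> \<le> C + e2 * (C - B)"
          unfolding A_def B_def by (rule core(2)[OF \<xi>(1) \<xi>(3) xu u(4) c(1) Dc \<eta>(1) \<eta>(2) \<eta>(3) e20 C(1) C(2) b(2) bu])
        have h0: "\<bar>K0 \<xi> u + X\<bar> \<le> C + e2 * X"
          using cr1 unfolding X_def by simp
        have h1: "\<bar>K1 \<xi> u - B\<bar> \<le> C + e2 * (C - B)" by (rule cr2)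
        have Beq: "B = - (2 * X + f1 \<xi>) / (2 * D)" by (simp add: B_def X_def D_def)
        have fd: "2 * X0 \<le> f \<xi> - f u" using Fb(2)[OF \<xi>K] hu by (auto simp: abs_le_iff)
        have X0p: "0 < X0" using C by (auto simp: X0_def)
        have "X = (f \<xi> - f u) / (2 * D)" by (simp add: X_def A_def D_def minus_divide_left)
        also have "\<dots> \<ge> (f \<xi> - f u) / 2" using D fd X0p by (intro divide_left_mono) auto
        finally have XX0: "X0 \<le> X" using fd by argo
        have X: "4 * C + 1 \<le> X" "16 * P / (c * \<epsilon>) \<le> X" using XX0 by (auto simp: X0_def)
        have main: "\<bar>K1 \<xi> u / K0 \<xi> u - 1 / D\<bar> \<le> \<epsilon> / 2"
          by (rule alg_main[OF c(1) D(1) D(2) \<epsilon> less_imp_le[OF e2(1)] e2(2) e2(3) less_imp_le[OF C(1)]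
                Cf(2)[OF \<xi>K] P_def X Beq h0 h1])
        have \<xi>c: "c \<le> 1 - \<xi>" using \<xi> by (simp add: c_def)
        have eqd: "1 / D - 1 / (1 - \<xi>) = (1 - u) / (D * (1 - \<xi>))" using D \<xi>
          by (simp add: D_def field_simps)
        have cc: "c * c \<le> D * (1 - \<xi>)" using D \<xi>c c by (intro mult_mono) auto
        have p1: "0 < D * (1 - \<xi>)" using D \<xi> by simp
        have p2: "0 < c * c" using c by simp
        have "(1 - u) / (D * (1 - \<xi>)) \<le> (1 - u) / (c * c)"
          by (rule divide_left_mono[OF cc]) (use u(4) mult_pos_pos[OF p1 p2] in auto)
        also have "\<dots> < \<epsilon> / 2"
          using u c by (simp add: divide_less_eq power2_eq_square algebra_simps)
        finally have sm: "\<bar>1 / D - 1 / (1 - \<xi>)\<bar> < \<epsilon> / 2"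
          using eqd u D \<xi> by (simp add: abs_of_nonneg)
        have dF: "deriv (\<lambda>x. F0 f x u) \<xi> = K1 \<xi> u" by (rule F0_d1[OF \<xi>(1,2) u0 u(4)])
        have F: "F0 f \<xi> u = K0 \<xi> u" by (rule F0_eq[OF \<xi>(1,2) u0 u(4)])
        have "\<bar>K1 \<xi> u / K0 \<xi> u - 1 / (1 - \<xi>)\<bar> < \<epsilon>" using main sm by linarith
        then show "dist (deriv (\<lambda>x. F0 f x u) \<xi> / F0 f \<xi> u) (1 / (1 - \<xi>)) < \<epsilon>"
          by (simp add: dF F dist_real_def)
      qed
    qed
  qed
qed

end

theorem lemma4p1:
  fixes f u0 :: "real \<Rightarrow> real"
  assumes u0_smooth: "smooth_on UNIV u0"
    and u0_decr: "\<And>x y. x < y \<Longrightarrow> u0 y < u0 x"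
    and u0_range: "\<And>x. 0 < u0 x \<and> u0 x < 1"
    and u0_bot: "(u0 \<longlongrightarrow> 1) at_bot"
    and u0_top: "(u0 \<longlongrightarrow> 0) at_top"
    and f_u0: "\<And>x. f (u0 x) = x"
    and u0_f: "\<And>u. 0 < u \<Longrightarrow> u < 1 \<Longrightarrow> u0 (f u) = u"
    and f_smooth: "smooth_on {0<..<1} f"
    and f'_neg: "\<And>u. 0 < u \<Longrightarrow> u < 1 \<Longrightarrow> deriv f u < 0"
    and f_lim0: "filterlim f at_top (at_right 0)"
    and f_lim1: "filterlim f at_bot (at_left 1)"
    and f'''_neg0: "\<exists>\<epsilon>>0. \<forall>u. 0 < u \<and> u < \<epsilon> \<longrightarrow> (deriv ^^ 3) f u < 0"
    and f'''_neg1: "\<exists>\<epsilon>>0. \<forall>u. 1 - \<epsilon> < u \<and> u < 1 \<longrightarrow> (deriv ^^ 3) f u < 0"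
  shows "(\<forall>u\<^sub>1. 0 < u\<^sub>1 \<and> u\<^sub>1 < 1 \<longrightarrow>
            filterlim (\<lambda>\<xi>. F0 f \<xi> u\<^sub>1) at_bot (at_right 0) \<and>
            filterlim (\<lambda>\<xi>. F0 f \<xi> u\<^sub>1) at_bot (at_left 1))
       \<and> (\<exists>\<delta>>0. \<forall>\<xi> u\<^sub>1. 0 < \<xi> \<and> \<xi> < 1 \<and> 1 - \<delta> < u\<^sub>1 \<and> u\<^sub>1 < 1 \<longrightarrow>
            deriv (deriv (\<lambda>x. F0 f x u\<^sub>1)) \<xi> < 0)
       \<and> (\<forall>K. compact K \<and> K \<subseteq> {0<..<1} \<longrightarrow>
            uniform_limit K
              (\<lambda>u\<^sub>1 \<xi>. deriv (\<lambda>x. F0 f x u\<^sub>1) \<xi> / F0 f \<xi> u\<^sub>1)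
              (\<lambda>\<xi>. 1 / (1 - \<xi>)) (at_left 1))"
proof -
  interpret L f using f_smooth f'_neg f_lim0 f_lim1 f'''_neg0 f'''_neg1 by unfold_locales
  have P1: "\<forall>u\<^sub>1. 0 < u\<^sub>1 \<and> u\<^sub>1 < 1 \<longrightarrow>
            filterlim (\<lambda>\<xi>. F0 f \<xi> u\<^sub>1) at_bot (at_right 0) \<and>
            filterlim (\<lambda>\<xi>. F0 f \<xi> u\<^sub>1) at_bot (at_left 1)"
    using part1 by blast
  obtain \<delta> where \<delta>: "\<delta> > 0" "\<And>x u. 0 < x \<and> x < 1 \<and> 1 - \<delta> < u \<and> u < 1 \<Longrightarrow> K2 x u < 0"
    using K2_neg by blast
  have P2: "\<exists>\<delta>>0. \<forall>\<xi> u\<^sub>1. 0 < \<xi> \<and> \<xi> < 1 \<and> 1 - \<delta> < u\<^sub>1 \<and> u\<^sub>1 < 1 \<longrightarrow>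
            deriv (deriv (\<lambda>x. F0 f x u\<^sub>1)) \<xi> < 0"
  proof (intro exI[of _ "min \<delta> 1"] conjI allI impI)
    show "0 < min \<delta> 1" using \<delta> by simp
    fix \<xi> u :: real assume h: "0 < \<xi> \<and> \<xi> < 1 \<and> 1 - min \<delta> 1 < u \<and> u < 1"
    then have "0 < u" "1 - \<delta> < u" by auto
    then show "deriv (deriv (\<lambda>x. F0 f x u)) \<xi> < 0"
      using F0_d2[of \<xi> u] \<delta>(2)[of \<xi> u] h by auto
  qed
  have P3: "\<forall>K. compact K \<and> K \<subseteq> {0<..<1} \<longrightarrow>
            uniform_limit K
              (\<lambda>u\<^sub>1 \<xi>. deriv (\<lambda>x. F0 f x u\<^sub>1) \<xi> / F0 f \<xi> u\<^sub>1)
              (\<lambda>\<xi>. 1 / (1 - \<xi>)) (at_left 1)"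
    using part3 by blast
  show ?thesis using P1 P2 P3 by blast
qed

end
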